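(* Let $(X,T,Y)$, $\psi$, $\mathcal G=\{g_\theta:\theta\in\Theta\}$ and $L$ be as described in the context, with $\psi$ satisfying Assumption 1, and suppose the policy class is correctly specified for the surrogate loss, i.e. $$\mathcal G\cap\Big(\operatorname*{argmin}_{g\ \text{unconstrained}}\mathbb E\big[|\psi|\, l(g(X),\operatorname{sign}(\psi))\big]\Big)\neq\varnothing,$$ where the argmin ranges over all measurable $g:\mathcal X\to\mathbb R$. Define $$m(X;\theta)=\mathbb E\big[|\psi|\, l'(g_\theta(X),\operatorname{sign}(\psi))\mid X\big].$$ Then for $\theta^*\in\Theta$, $$\theta^*\in\operatorname*{argmin}_{\theta\in\Theta}L(\theta)\iff m(X;\theta^* )=0\ \text{almost surely}.$$
   Context: $X$ is a context taking values in a space $\mathcal X$, $T\in\{-1,1\}$ is a treatment, $Y\in\mathbb R$ is an outcome, and $Y(-1),Y(1)$ are potential outcomes with $Y=Y(T)$ and $Y(t)\perp T\mid X$ for each $t$. A score variable $\psi$ is a real-valued random variable depending on observables. Assumption 1: $\mathbb E[\psi\mid X]=\mathbb E[Y(1)-Y(-1)\mid X]$ almost surely and $\mathbb E[|\psi|]<\infty$. $\Theta\subseteq\mathbb R^d$ and each $g_\theta:\mathcal X\to\mathbb R$ is measurable. The logistic surrogate loss is $l(g,s)=2\log(1+\exp(g))-(s+1)g$ for $g\in\mathbb R$, $s\in\{-1,1\}$, with derivative in $g$ given by $l'(g,s)=2\sigma(g)-(s+1)$, where $\sigma(g)=\exp(g)/(1+\exp(g))$. The population surrogate risk is $L(\theta)=\mathbb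 E[|\psi|\, l(g_\theta(X),\operatorname{sign}(\psi))]$. *)

theory Defs
  imports "HOL-Probability.Probability"
begin

definition sigmoid :: "real \<Rightarrow> real" where
  "sigmoid g = exp g / (1 + exp g)"

definition logistic_loss :: "real \<Rightarrow> real \<Rightarrow> real" where
  "logistic_loss g s = 2 * ln (1 + exp g) - (s + 1) * g"

definition logistic_loss_deriv :: "real \<Rightarrow> real \<Rightarrow> real" where
  "logistic_loss_deriv g s = 2 * sigmoid g - (s + 1)"

definition cond_exp_given ::
  "'w measure \<Rightarrow> 'x measure \<Rightarrow> ('w \<Rightarrow> 'x) \<Rightarrow> ('w \<Rightarrow> real) \<Rightarrow> ('w \<Rightarrow> real)" where
  "cond_exp_given M MX X f = real_cond_exp M (vimage_algebra (space M) X MX) f"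

definition cond_indep_given ::
  "'w measure \<Rightarrow> 'x measure \<Rightarrow> ('w \<Rightarrow> 'x) \<Rightarrow> ('w \<Rightarrow> real) \<Rightarrow> ('w \<Rightarrow> real) \<Rightarrow> bool" where
  "cond_indep_given M MX X U V \<longleftrightarrow>
     (\<forall>A\<in>sets borel. \<forall>B\<in>sets borel.
        AE w in M. cond_exp_given M MX X
                     (\<lambda>v. indicator (U -` A) v * indicator (V -` B) v) w
                 = cond_exp_given M MX X (indicator (U -` A)) w
                   * cond_exp_given M MX X (indicator (V -` B)) w)"

text \<open>Population surrogate risk of a (not necessarily parametrised) policy score g.
  Nonnegative integrand, so the nonnegative integral (possibly infinite) is used.\<close>
definition surrogate_risk ::
  "'w measure \<Rightarrow> ('w \<Rightarrow> 'x) \<Rightarrow> ('w \<Rightarrow> real) \<Rightarrow> ('x \<Rightarrow> real) \<Rightarrow> ennreal" where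
  "surrogate_risk M X psi g =
     (\<integral>\<^sup>+ w. ennreal (\<bar>psi w\<bar> * logistic_loss (g (X w)) (sgn (psi w))) \<partial>M)"

end

theory Submission
  imports Defs
begin

definition phi1 :: "real \<Rightarrow> real" where "phi1 t = 2 * ln (1 + exp (- t))"
definition phi2 :: "real \<Rightarrow> real" where "phi2 t = 2 * ln (1 + exp t)"
definition cfun :: "real \<Rightarrow> real \<Rightarrow> real \<Rightarrow> real" where
  "cfun a b t = a * phi1 t + b * phi2 t"

lemma phi1_nonneg: "phi1 t \<ge> 0" unfolding phi1_def by simp
lemma phi2_nonneg: "phi2 t \<ge> 0" unfolding phi2_def by simp

lemma ln_shift: "ln (1 + exp t) - (t::real) = ln (1 + exp (- t))"
proof -
  have "1 + exp (- t) = (1 + exp t) * exp (- t)"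
    by (simp add: distrib_right exp_minus_inverse)
  moreover have "ln ((1 + exp t) * exp (- t)) = ln (1 + exp t) + ln (exp (- t))"
    by (rule ln_mult_pos) (simp_all add: add_pos_pos)
  ultimately have "ln (1 + exp (- t)) = ln (1 + exp t) + ln (exp (- t))" by simp
  then show ?thesis by simp
qed

lemma phi1_phi2: "phi1 t = phi2 t - 2 * t"
  unfolding phi1_def phi2_def using ln_shift[of t] by simp

lemma loss_split:
  "\<bar>p\<bar> * logistic_loss t (sgn p) = max p 0 * phi1 t + max (- p) 0 * phi2 t"
  by (cases "p > 0"; cases "p < 0")
     (auto simp: logistic_loss_def phi1_phi2 phi2_def algebra_simps)

lemma deriv_split:
  "\<bar>p\<bar> * logistic_loss_deriv t (sgn p) = 2 * sigmoid t * (max p 0 + max (- p) 0) - 2 * max p 0"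
  by (cases "p > 0"; cases "p < 0")
     (auto simp: logistic_loss_deriv_def algebra_simps)

lemma sigmoid_bounds: "0 < sigmoid t" "sigmoid t < 1"
  unfolding sigmoid_def by (auto simp: add_pos_pos)

lemma supp2: "phi2 s \<ge> phi2 t + 2 * sigmoid t * (s - t)"
proof -
  define q where "q = sigmoid t"
  have q: "0 < q" "q < 1" using sigmoid_bounds q_def by auto
  have nz: "1 + exp t \<noteq> 0" by (metis add_pos_pos exp_gt_zero less_irrefl zero_less_one)
  have e1: "1 + exp s = (1 + exp t) * ((1 - q) + q * exp (s - t))"
    unfolding q_def sigmoid_def using nz by (simp add: field_simps exp_diff)
  have "exp ((1 - q) *\<^sub>R 0 + q *\<^sub>R (s - t)) \<le> (1 - q) * exp 0 + q * exp (s - t)"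
    using convex_onD[OF exp_convex, of q 0 "s - t"] q by simp
  then have "exp (q * (s - t)) \<le> (1 - q) + q * exp (s - t)" by simp
  then have "q * (s - t) \<le> ln ((1 - q) + q * exp (s - t))"
    by (metis exp_gt_zero ln_exp ln_le_cancel_iff order_less_le_trans)
  moreover have "ln (1 + exp s) = ln (1 + exp t) + ln ((1 - q) + q * exp (s - t))"
    unfolding e1 using q by (intro ln_mult_pos) (auto simp: add_pos_pos intro!: add_pos_nonneg)
  ultimately show ?thesis unfolding phi2_def q_def by simp
qed

lemma supp:
  assumes "a \<ge> 0" "b \<ge> 0"
  shows "cfun a b s \<ge> cfun a b t + 2 * ((a + b) * sigmoid t - a) * (s - t)"
proof -
  have h2: "phi2 s \<ge> phi2 t + 2 * sigmoid t * (s - t)" by (rule supp2)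
  have h1: "phi1 s \<ge> phi1 t + 2 * (sigmoid t - 1) * (s - t)"
    using h2 unfolding phi1_phi2 by (simp add: algebra_simps)
  have "a * phi1 s \<ge> a * (phi1 t + 2 * (sigmoid t - 1) * (s - t))"
    using h1 assms by (intro mult_left_mono) auto
  moreover have "b * phi2 s \<ge> b * (phi2 t + 2 * sigmoid t * (s - t))"
    using h2 assms by (intro mult_left_mono) auto
  ultimately show ?thesis unfolding cfun_def by (simp add: algebra_simps)
qed


lemma cfun_meas[measurable]:
  assumes [measurable]: "a \<in> borel_measurable N" "b \<in> borel_measurable N" "c \<in> borel_measurable N"
  shows "(\<lambda>w. cfun (a w) (b w) (c w)) \<in> borel_measurable N"
  unfolding cfun_def phi1_def phi2_def by measurable

lemma sigmoid_meas[measurable]: "sigmoid \<in> borel_measurable borel"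
  unfolding sigmoid_def by measurable

lemma sigmoid_tendsto:
  assumes "(f \<longlongrightarrow> l) Fi"
  shows "((\<lambda>x. sigmoid (f x)) \<longlongrightarrow> sigmoid l) Fi"
proof -
  have "1 + exp l \<noteq> 0" by (metis add_pos_pos exp_gt_zero less_irrefl zero_less_one)
  then show ?thesis unfolding sigmoid_def by (intro tendsto_intros assms)
qed

lemma cfun_nonneg: "a \<ge> 0 \<Longrightarrow> b \<ge> 0 \<Longrightarrow> cfun a b t \<ge> 0"
  unfolding cfun_def using phi1_nonneg phi2_nonneg by simp


locale sset = prob_space M for M :: "'w measure" +
  fixes MX :: "'x measure" and X :: "'w \<Rightarrow> 'x" and psi :: "'w \<Rightarrow> real"
  assumes Xm[measurable]: "X \<in> measurable M MX"
    and psim[measurable]: "psi \<in> borel_measurable M"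
    and psii: "integrable M psi"
begin

abbreviation "F \<equiv> vimage_algebra (space M) X MX"

lemma subalg: "subalgebra M F"
  unfolding subalgebra_def using sets_image_in_sets[OF refl Xm] by simp

lemma fms: "finite_measure_subalgebra M F"
  by (intro_locales) (simp add: finite_measure_subalgebra_axioms_def subalg)

interpretation fs: finite_measure_subalgebra M F by (rule fms)

lemma XF[measurable]: "X \<in> measurable F MX"
  using measurable_vimage_algebra1[of X "space M" MX] measurable_space[OF Xm] by auto

abbreviation "A \<equiv> real_cond_exp M F (\<lambda>w. max (psi w) 0)"
abbreviation "B \<equiv> real_cond_exp M F (\<lambda>w. max (- psi w) 0)"

lemma int_pos: "integrable M (\<lambda>w. max (psi w) 0)"
  using psii by (intro integrable_max) auto
lemma int_neg: "integrable M (\<lambda>w. max (- psi w) 0)"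
  using psii by (intro integrable_max) auto

lemma A_nonneg: "AE w in M. A w \<ge> 0"
  by (rule fs.real_cond_exp_pos) auto
lemma B_nonneg: "AE w in M. B w \<ge> 0"
  by (rule fs.real_cond_exp_pos) auto

lemma nn_eq:
  fixes p :: "'w \<Rightarrow> real"
  assumes [measurable]: "p \<in> borel_measurable M" and pi: "integrable M p" and pn: "\<And>w. p w \<ge> 0"
  shows "AE w in M. nn_cond_exp M F (\<lambda>w. ennreal (p w)) w = ennreal (real_cond_exp M F p w)"
proof -
  have z: "(\<lambda>w. ennreal (- p w)) = (\<lambda>w. 0)" using pn by (auto simp: ennreal_neg)
  have "AE w in M. (\<lambda>w. 0) w = nn_cond_exp M F (\<lambda>w. 0) w"
    by (rule fs.nn_cond_exp_F_meas) auto
  then have z2: "AE w in M. nn_cond_exp M F (\<lambda>w. ennreal (- p w)) w = 0"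
    unfolding z by auto
  have "(\<integral>\<^sup>+ w. 1 * nn_cond_exp M F (\<lambda>w. ennreal (p w)) w \<partial>M) = (\<integral>\<^sup>+ w. 1 * ennreal (p w) \<partial>M)"
    by (rule fs.nn_cond_exp_intg) auto
  also have "\<dots> < \<infinity>" using pi pn by (simp add: integrable_iff_bounded less_top[symmetric])
  finally have "(\<integral>\<^sup>+ w. nn_cond_exp M F (\<lambda>w. ennreal (p w)) w \<partial>M) \<noteq> \<infinity>" by simp
  then have fin: "AE w in M. nn_cond_exp M F (\<lambda>w. ennreal (p w)) w \<noteq> \<infinity>"
    by (intro nn_integral_PInf_AE) auto
  show ?thesis using z2 fin
    by eventually_elim (auto simp: real_cond_exp_def ennreal_enn2real_if)
qed

lemma risk_formula:
  assumes GF[measurable]: "G \<in> borel_measurable F"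
  shows "(\<integral>\<^sup>+ w. ennreal (\<bar>psi w\<bar> * logistic_loss (G w) (sgn (psi w))) \<partial>M)
       = (\<integral>\<^sup>+ w. ennreal (cfun (A w) (B w) (G w)) \<partial>M)"
proof -
  have GM[measurable]: "G \<in> borel_measurable M"
    using GF subalg by (metis measurable_from_subalg)
  have [measurable]: "phi1 \<in> borel_measurable borel" "phi2 \<in> borel_measurable borel"
    unfolding phi1_def phi2_def by auto
  have e1: "(\<integral>\<^sup>+ w. ennreal (phi1 (G w)) * ennreal (max (psi w) 0) \<partial>M)
      = (\<integral>\<^sup>+ w. ennreal (phi1 (G w)) * ennreal (A w) \<partial>M)"
  proof -
    have "(\<integral>\<^sup>+ w. ennreal (phi1 (G w)) * ennreal (max (psi w) 0) \<partial>M)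
       = (\<integral>\<^sup>+ w. ennreal (phi1 (G w)) * nn_cond_exp M F (\<lambda>w. ennreal (max (psi w) 0)) w \<partial>M)"
      by (rule fs.nn_cond_exp_intg[symmetric]) auto
    also have "\<dots> = (\<integral>\<^sup>+ w. ennreal (phi1 (G w)) * ennreal (A w) \<partial>M)"
      using nn_eq[of "\<lambda>w. max (psi w) 0"] int_pos
      by (intro nn_integral_cong_AE) auto
    finally show ?thesis .
  qed
  have e2: "(\<integral>\<^sup>+ w. ennreal (phi2 (G w)) * ennreal (max (- psi w) 0) \<partial>M)
      = (\<integral>\<^sup>+ w. ennreal (phi2 (G w)) * ennreal (B w) \<partial>M)"
  proof -
    have "(\<integral>\<^sup>+ w. ennreal (phi2 (G w)) * ennreal (max (- psi w) 0) \<partial>M)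
       = (\<integral>\<^sup>+ w. ennreal (phi2 (G w)) * nn_cond_exp M F (\<lambda>w. ennreal (max (- psi w) 0)) w \<partial>M)"
      by (rule fs.nn_cond_exp_intg[symmetric]) auto
    also have "\<dots> = (\<integral>\<^sup>+ w. ennreal (phi2 (G w)) * ennreal (B w) \<partial>M)"
      using nn_eq[of "\<lambda>w. max (- psi w) 0"] int_neg
      by (intro nn_integral_cong_AE) auto
    finally show ?thesis .
  qed
  have "(\<integral>\<^sup>+ w. ennreal (\<bar>psi w\<bar> * logistic_loss (G w) (sgn (psi w))) \<partial>M)
      = (\<integral>\<^sup>+ w. ennreal (phi1 (G w)) * ennreal (max (psi w) 0)
                 + ennreal (phi2 (G w)) * ennreal (max (- psi w) 0) \<partial>M)"
    by (intro nn_integral_cong)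
       (simp add: loss_split phi1_nonneg phi2_nonneg ennreal_plus ennreal_mult'' mult.commute)
  also have "\<dots> = (\<integral>\<^sup>+ w. ennreal (phi1 (G w)) * ennreal (max (psi w) 0) \<partial>M)
                 + (\<integral>\<^sup>+ w. ennreal (phi2 (G w)) * ennreal (max (- psi w) 0) \<partial>M)"
    by (rule nn_integral_add) auto
  also have "\<dots> = (\<integral>\<^sup>+ w. ennreal (phi1 (G w)) * ennreal (A w) \<partial>M)
                 + (\<integral>\<^sup>+ w. ennreal (phi2 (G w)) * ennreal (B w) \<partial>M)"
    using e1 e2 by simp
  also have "\<dots> = (\<integral>\<^sup>+ w. ennreal (phi1 (G w)) * ennreal (A w) + ennreal (phi2 (G w)) * ennreal (B w) \<partial>M)"
    by (rule nn_integral_add[symmetric]) auto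
  also have "\<dots> = (\<integral>\<^sup>+ w. ennreal (cfun (A w) (B w) (G w)) \<partial>M)"
    using A_nonneg B_nonneg
    by (intro nn_integral_cong_AE, eventually_elim)
       (simp add: cfun_def phi1_nonneg phi2_nonneg ennreal_plus ennreal_mult'' mult.commute)
  finally show ?thesis .
qed


lemma deriv_ce:
  assumes GF[measurable]: "G \<in> borel_measurable F"
  shows "AE w in M. real_cond_exp M F (\<lambda>v. \<bar>psi v\<bar> * logistic_loss_deriv (G v) (sgn (psi v))) w
           = 2 * sigmoid (G w) * (A w + B w) - 2 * A w"
proof -
  have GM[measurable]: "G \<in> borel_measurable M"
    using GF subalg by (metis measurable_from_subalg)
  define p where "p = (\<lambda>w. max (psi w) 0)"
  define n where "n = (\<lambda>w. max (- psi w) 0)"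
  have [measurable]: "p \<in> borel_measurable M" "n \<in> borel_measurable M" unfolding p_def n_def by auto
  have ip: "integrable M p" and inn: "integrable M n" using int_pos int_neg unfolding p_def n_def by auto
  have ipn: "integrable M (\<lambda>w. p w + n w)" using ip inn by auto
  have i1: "integrable M (\<lambda>w. 2 * sigmoid (G w) * (p w + n w))"
  proof (rule Bochner_Integration.integrable_bound[OF integrable_mult_right[OF ipn, of 2]])
    show "(\<lambda>w. 2 * sigmoid (G w) * (p w + n w)) \<in> borel_measurable M" by measurable
    show "AE w in M. norm (2 * sigmoid (G w) * (p w + n w)) \<le> norm (2 * (p w + n w))"
    proof (rule AE_I2)
      fix w
      have "p w + n w \<ge> 0" unfolding p_def n_def by simp
      moreover have "0 < sigmoid (G w)" "sigmoid (G w) < 1" using sigmoid_bounds by auto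
      ultimately show "norm (2 * sigmoid (G w) * (p w + n w)) \<le> norm (2 * (p w + n w))"
        apply -
      proof -
        assume h: "0 \<le> p w + n w" "0 < sigmoid (G w)" "sigmoid (G w) < 1"
        have "sigmoid (G w) * (p w + n w) \<le> p w + n w"
          by (rule mult_left_le_one_le) (use h in auto)
        then show ?thesis using h by (simp add: abs_mult)
      qed
    qed
  qed
  have ip2: "integrable M (\<lambda>w. 2 * p w)" using ip by auto
  have feq: "(\<lambda>v. \<bar>psi v\<bar> * logistic_loss_deriv (G v) (sgn (psi v)))
      = (\<lambda>v. 2 * sigmoid (G v) * (p v + n v) - 2 * p v)"
    unfolding p_def n_def by (simp add: deriv_split)
  have a1: "AE w in M. real_cond_exp M F (\<lambda>v. 2 * sigmoid (G v) * (p v + n v) - 2 * p v) w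
     = real_cond_exp M F (\<lambda>v. 2 * sigmoid (G v) * (p v + n v)) w - real_cond_exp M F (\<lambda>v. 2 * p v) w"
    by (rule fs.real_cond_exp_diff[OF i1 ip2])
  have a2: "AE w in M. real_cond_exp M F (\<lambda>v. (2 * sigmoid (G v)) * (p v + n v)) w
     = (2 * sigmoid (G w)) * real_cond_exp M F (\<lambda>v. p v + n v) w"
    by (rule fs.real_cond_exp_mult) (use i1 in auto)
  have a3: "AE w in M. real_cond_exp M F (\<lambda>v. p v + n v) w = A w + B w"
    using fs.real_cond_exp_add[OF ip inn] unfolding p_def n_def .
  have a4: "AE w in M. real_cond_exp M F (\<lambda>v. 2 * p v) w = 2 * A w"
    using fs.real_cond_exp_cmult[OF ip, of 2] unfolding p_def .
  show ?thesis unfolding feq using a1 a2 a3 a4 by eventually_elim simp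
qed

definition "risk g = surrogate_risk M X psi g"

lemma risk_comp:
  assumes [measurable]: "g \<in> borel_measurable MX"
  shows "risk g = (\<integral>\<^sup>+ w. ennreal (cfun (A w) (B w) (g (X w))) \<partial>M)"
  unfolding risk_def surrogate_risk_def by (rule risk_formula) measurable

lemma risk_zero_fin: "risk (\<lambda>_. 0) \<noteq> \<infinity>"
proof -
  have "risk (\<lambda>_. 0) = (\<integral>\<^sup>+ w. ennreal (\<bar>psi w\<bar> * (2 * ln 2)) \<partial>M)"
    unfolding risk_def surrogate_risk_def logistic_loss_def by simp
  also have "\<dots> = ennreal (\<integral> w. \<bar>psi w\<bar> * (2 * ln 2) \<partial>M)"
    by (rule nn_integral_eq_integral) (use psii in auto)
  finally show ?thesis by simp
qed

lemma pert:
  assumes g0[measurable]: "g0 \<in> borel_measurable MX"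
    and mn: "\<forall>h \<in> borel_measurable MX. risk g0 \<le> risk h"
    and EF: "E \<in> sets F" and Epos: "emeasure M E \<noteq> 0"
    and strict: "AE w in M. w \<in> E \<longrightarrow> cfun (A w) (B w) (g0 (X w) + d) < cfun (A w) (B w) (g0 (X w))"
  shows False
proof -
  have Xs: "X \<in> space M \<rightarrow> space MX" using measurable_space[OF Xm] by auto
  obtain S where S[measurable]: "S \<in> sets MX" and ES: "E = X -` S \<inter> space M"
    using EF unfolding sets_vimage_algebra2[OF Xs] by auto
  have EM: "E \<in> sets M" using EF subalg unfolding subalgebra_def by auto
  define h where "h = (\<lambda>x. g0 x + d * indicator S x)"
  have hm[measurable]: "h \<in> borel_measurable MX" unfolding h_def by measurable
  define f0 where "f0 = (\<lambda>w. ennreal (cfun (A w) (B w) (g0 (X w))))"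
  define fh where "fh = (\<lambda>w. ennreal (cfun (A w) (B w) (h (X w))))"
  have [measurable]: "f0 \<in> borel_measurable M" "fh \<in> borel_measurable M"
    unfolding f0_def fh_def by measurable
  have r0: "risk g0 = integral\<^sup>N M f0" unfolding f0_def by (rule risk_comp) measurable
  have rh: "risk h = integral\<^sup>N M fh" unfolding fh_def by (rule risk_comp) measurable
  have fin0: "integral\<^sup>N M f0 \<noteq> \<infinity>"
  proof -
    have "risk g0 \<le> risk (\<lambda>_. 0)" using mn by simp
    then have "risk g0 \<noteq> \<infinity>" using risk_zero_fin by (auto simp: top_unique)
    then show ?thesis using r0 by simp
  qed
  have le: "AE w in M. fh w \<le> f0 w"
    using strict A_nonneg B_nonneg AE_space
  proof eventually_elim
    case (elim w)
    show ?case
    proof (cases "w \<in> E")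
      case True
      then have "X w \<in> S" using ES by auto
      then show ?thesis using True elim unfolding fh_def f0_def h_def
        by (auto intro!: ennreal_leI)
    next
      case False
      then have "X w \<notin> S" using ES elim by auto
      then show ?thesis unfolding fh_def f0_def h_def by simp
    qed
  qed
  have nle: "\<not> (AE w in M. f0 w \<le> fh w)"
  proof
    assume "AE w in M. f0 w \<le> fh w"
    then have "AE w in M. w \<notin> E"
      using strict A_nonneg B_nonneg AE_space
    proof eventually_elim
      case (elim w)
      show ?case
      proof
        assume wE: "w \<in> E"
        then have "X w \<in> S" using ES by auto
        then have "fh w = ennreal (cfun (A w) (B w) (g0 (X w) + d))" unfolding fh_def h_def by simp
        also have "\<dots> < f0 w" unfolding f0_def using elim wE cfun_nonneg[of "A w" "B w" "g0 (X w) + d"]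
          by (subst ennreal_less_iff) auto
        finally show False using elim by simp
      qed
    qed
    moreover have "{x \<in> space M. \<not> x \<notin> E} = E" using sets.sets_into_space[OF EM] by auto
    ultimately have "emeasure M E = 0" using AE_iff_measurable[of E M "\<lambda>x. x \<notin> E"] EM by simp
    then show False using Epos by simp
  qed
  have finh: "integral\<^sup>N M fh \<noteq> \<infinity>"
    using nn_integral_mono_AE[OF le] fin0 by (auto simp: top_unique)
  have "integral\<^sup>N M fh < integral\<^sup>N M f0"
    by (rule nn_integral_less) (use finh le nle in auto)
  then have "risk h < risk g0" using r0 rh by simp
  then show False using mn hm by (simp add: not_le[symmetric])
qed


lemma stationary:
  assumes g0[measurable]: "g0 \<in> borel_measurable MX"
    and mn: "\<forall>h \<in> borel_measurable MX. risk g0 \<le> risk h"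
  shows "AE w in M. sigmoid (g0 (X w)) * (A w + B w) - A w = 0"
proof -
  have side: "AE w in M. e * (sigmoid (g0 (X w)) * (A w + B w) - A w) \<le> 0"
    if e: "e = 1 \<or> e = -1" for e :: real
  proof -
    define E where "E n = {w \<in> space M. e * (sigmoid (g0 (X w) - e * inverse (real (Suc n))) * (A w + B w) - A w) > 0}" for n
    have EF: "E n \<in> sets F" for n
    proof -
      have "{w \<in> space F. e * (sigmoid (g0 (X w) - e * inverse (real (Suc n))) * (A w + B w) - A w) > 0} \<in> sets F"
        by measurable
      then show ?thesis unfolding E_def by simp
    qed
    have EM: "E n \<in> sets M" for n using EF subalg unfolding subalgebra_def by auto
    have null: "emeasure M (E n) = 0" for n
    proof (rule ccontr)
      assume ne: "emeasure M (E n) \<noteq> 0"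
      define \<delta> where "\<delta> = inverse (real (Suc n))"
      have dpos: "\<delta> > 0" unfolding \<delta>_def by simp
      have "AE w in M. w \<in> E n \<longrightarrow> cfun (A w) (B w) (g0 (X w) + (- e * \<delta>)) < cfun (A w) (B w) (g0 (X w))"
        using A_nonneg B_nonneg
      proof eventually_elim
        case (elim w)
        show ?case
        proof
          assume "w \<in> E n"
          then have pos: "e * (sigmoid (g0 (X w) - e * \<delta>) * (A w + B w) - A w) > 0"
            unfolding E_def \<delta>_def by simp
          have h1: "cfun (A w) (B w) (g0 (X w)) \<ge> cfun (A w) (B w) (g0 (X w) - e * \<delta>)
             + 2 * ((A w + B w) * sigmoid (g0 (X w) - e * \<delta>) - A w) * (g0 (X w) - (g0 (X w) - e * \<delta>))"
            by (rule supp) (use elim in auto)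
          have h2: "2 * ((A w + B w) * sigmoid (g0 (X w) - e * \<delta>) - A w) * (g0 (X w) - (g0 (X w) - e * \<delta>))
              = 2 * \<delta> * (e * (sigmoid (g0 (X w) - e * \<delta>) * (A w + B w) - A w))"
            by (simp add: algebra_simps)
          have h3: "2 * \<delta> * (e * (sigmoid (g0 (X w) - e * \<delta>) * (A w + B w) - A w)) > 0"
            using pos dpos by simp
          have "cfun (A w) (B w) (g0 (X w) - e * \<delta>) < cfun (A w) (B w) (g0 (X w))"
            using h1 h2 h3 by linarith
          then show "cfun (A w) (B w) (g0 (X w) + (- e * \<delta>)) < cfun (A w) (B w) (g0 (X w))"
            by simp
        qed
      qed
      then show False by (rule pert[OF g0 mn EF ne])
    qed
    have "AE w in M. \<forall>n. w \<notin> E n"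
      unfolding AE_all_countable using null EM by (auto intro!: AE_not_in)
    then show ?thesis using AE_space
    proof eventually_elim
      case (elim w)
      have lim: "(\<lambda>n. e * (sigmoid (g0 (X w) - e * inverse (real (Suc n))) * (A w + B w) - A w))
          \<longlonglongrightarrow> e * (sigmoid (g0 (X w) - e * 0) * (A w + B w) - A w)"
        by (intro tendsto_intros sigmoid_tendsto LIMSEQ_inverse_real_of_nat)
      have "\<forall>n. e * (sigmoid (g0 (X w) - e * inverse (real (Suc n))) * (A w + B w) - A w) \<le> 0"
        using elim unfolding E_def by (auto simp: not_less)
      then show ?case using LIMSEQ_le_const2[OF lim] by simp
    qed
  qed
  have s1: "AE w in M. 1 * (sigmoid (g0 (X w)) * (A w + B w) - A w) \<le> 0" by (rule side) simp
  have s2: "AE w in M. (-1) * (sigmoid (g0 (X w)) * (A w + B w) - A w) \<le> 0" by (rule side) simp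
  from s1 s2 show ?thesis by eventually_elim simp
qed

end

theorem theorem2:
  fixes M :: "'w measure" and MX :: "'x measure"
    and X :: "'w \<Rightarrow> 'x" and T Y Y1 Ym1 psi :: "'w \<Rightarrow> real"
    and \<Theta> :: "(real ^ 'd) set" and g :: "real ^ 'd \<Rightarrow> 'x \<Rightarrow> real"
    and \<theta>s :: "real ^ 'd"
  assumes "prob_space M"
    and "X \<in> measurable M MX"
    and "T \<in> borel_measurable M" and "Y \<in> borel_measurable M"
    and "Y1 \<in> borel_measurable M" and "Ym1 \<in> borel_measurable M"
    and "psi \<in> borel_measurable M"
    and "\<forall>w\<in>space M. T w \<in> {-1, 1}"
    and "\<forall>w\<in>space M. Y w = (if T w = 1 then Y1 w else Ym1 w)"
    and "cond_indep_given M MX X Y1 T"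
    and "cond_indep_given M MX X Ym1 T"
    \<comment> \<open>Assumption 1\<close>
    and "AE w in M. cond_exp_given M MX X psi w = cond_exp_given M MX X (\<lambda>v. Y1 v - Ym1 v) w"
    and "integrable M psi"
    \<comment> \<open>measurable policy class\<close>
    and "\<forall>\<theta>\<in>\<Theta>. g \<theta> \<in> borel_measurable MX"
    \<comment> \<open>correct specification\<close>
    and "\<exists>\<theta>0\<in>\<Theta>. \<forall>h \<in> borel_measurable MX.
           surrogate_risk M X psi (g \<theta>0) \<le> surrogate_risk M X psi h"
    and "\<theta>s \<in> \<Theta>"
  shows "(\<forall>\<theta>\<in>\<Theta>. surrogate_risk M X psi (g \<theta>s) \<le> surrogate_risk M X psi (g \<theta>))
     \<longleftrightarrow> (AE w in M. cond_exp_given M MX X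
             (\<lambda>v. \<bar>psi v\<bar> * logistic_loss_deriv (g \<theta>s (X v)) (sgn (psi v))) w = 0)"
proof -
  interpret S: sset M MX X psi
    using assms(1,2,7,13) by (simp add: sset_def sset_axioms_def)
  let ?A = "real_cond_exp M (vimage_algebra (space M) X MX) (\<lambda>w. max (psi w) 0)"
  let ?B = "real_cond_exp M (vimage_algebra (space M) X MX) (\<lambda>w. max (- psi w) 0)"
  have gs[measurable]: "g \<theta>s \<in> borel_measurable MX" using assms(14,16) by auto
  have GsF: "(\<lambda>w. g \<theta>s (X w)) \<in> borel_measurable (vimage_algebra (space M) X MX)"
    by measurable
  have dce: "AE w in M. cond_exp_given M MX X
             (\<lambda>v. \<bar>psi v\<bar> * logistic_loss_deriv (g \<theta>s (X v)) (sgn (psi v))) w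
          = 2 * (sigmoid (g \<theta>s (X w)) * (?A w + ?B w) - ?A w)"
    using S.deriv_ce[OF GsF] unfolding cond_exp_given_def by eventually_elim (simp add: algebra_simps)
  show ?thesis
  proof
    assume H: "\<forall>\<theta>\<in>\<Theta>. surrogate_risk M X psi (g \<theta>s) \<le> surrogate_risk M X psi (g \<theta>)"
    obtain \<theta>0 where t0: "\<theta>0 \<in> \<Theta>" and m0: "\<forall>h \<in> borel_measurable MX.
           surrogate_risk M X psi (g \<theta>0) \<le> surrogate_risk M X psi h" using assms(15) by blast
    have "\<forall>h \<in> borel_measurable MX. S.risk (g \<theta>s) \<le> S.risk h"
      unfolding S.risk_def using H t0 m0 order_trans by blast
    then have "AE w in M. sigmoid (g \<theta>s (X w)) * (?A w + ?B w) - ?A w = 0"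
      by (rule S.stationary[OF gs])
    then show "AE w in M. cond_exp_given M MX X
             (\<lambda>v. \<bar>psi v\<bar> * logistic_loss_deriv (g \<theta>s (X v)) (sgn (psi v))) w = 0"
      using dce by eventually_elim simp
  next
    assume H: "AE w in M. cond_exp_given M MX X
             (\<lambda>v. \<bar>psi v\<bar> * logistic_loss_deriv (g \<theta>s (X v)) (sgn (psi v))) w = 0"
    have D0: "AE w in M. (?A w + ?B w) * sigmoid (g \<theta>s (X w)) - ?A w = 0"
      using H dce by eventually_elim (simp add: algebra_simps)
    show "\<forall>\<theta>\<in>\<Theta>. surrogate_risk M X psi (g \<theta>s) \<le> surrogate_risk M X psi (g \<theta>)"
    proof
      fix \<theta> assume th: "\<theta> \<in> \<Theta>"
      have gt[measurable]: "g \<theta> \<in> borel_measurable MX" using assms(14) th by auto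
      have "S.risk (g \<theta>s) \<le> S.risk (g \<theta>)"
        unfolding S.risk_comp[OF gs] S.risk_comp[OF gt]
      proof (rule nn_integral_mono_AE)
        show "AE w in M. ennreal (cfun (?A w) (?B w) (g \<theta>s (X w))) \<le> ennreal (cfun (?A w) (?B w) (g \<theta> (X w)))"
          using D0 S.A_nonneg S.B_nonneg
        proof eventually_elim
          case (elim w)
          have "cfun (?A w) (?B w) (g \<theta> (X w)) \<ge> cfun (?A w) (?B w) (g \<theta>s (X w))
             + 2 * ((?A w + ?B w) * sigmoid (g \<theta>s (X w)) - ?A w) * (g \<theta> (X w) - g \<theta>s (X w))"
            by (rule supp) (use elim in auto)
          then show ?case using elim by (intro ennreal_leI) simp
        qed
      qed
      then show "surrogate_risk M X psi (g \<theta>s) \<le> surrogate_risk M X psi (g \<theta>)"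
        unfolding S.risk_def .
    qed
  qed
qed

end
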